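(* Let $A\ge2$ and $\mathcal A=\{a_1,\dots,a_A\}$. Consider the chain MDP with states $s_1,\dots,s_H$ and an absorbing terminal state $s_T$, started deterministically at $s_1$. At $s_k$ with $k<H$, action $a_1$ moves to $s_{k+1}$ and every other action moves to $s_T$; $s_T$ is absorbing under all actions. (Whatever $a_1$ does at $s_H$ is irrelevant.) Let $r$ be non-negative mean rewards with $r_h(s_k,a_1)=0$ and $r_h(s_T,a)=0$ for all $h,k,a$, and suppose not all $r_k(s_k,a)$, $k\in[H]$, $a\ne a_1$, vanish. Then $$CR^H(P,r)=CR^1(P,r)=\frac{\max_{k\in[H],\,a\in\mathcal A}r_k(s_k,a)}{\sum_{k=1}^H\sum_{a\in\mathcal A}r_k(s_k,a)}\ge\frac{1}{(A-1)H}.$$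
   Context: Episodic tabular MDP $(\mathcal S,\mathcal A,H,P,R,\mu)$: finite state space $\mathcal S$ with $|\mathcal S|=S$, finite action space $\mathcal A$ with $|\mathcal A|=A$, horizon $H\in\mathbb N$, transition kernels $P_h(\cdot\mid s,a)$, initial state distribution $\mu$, and random non-negative rewards $R_h(s,a)$ for $(h,s,a)\in\mathcal X:=[H]\times\mathcal S\times\mathcal A$. Initially $s_1\sim\mu$; at step $h$ the agent in state $s_h$ picks $a_h$, receives $R_h(s_h,a_h)$ and moves to $s_{h+1}\sim P_h(\cdot\mid s_h,a_h)$. All rewards are drawn before the interaction. The vectors $\mathcal R_h=\{R_h(s,a)\}_{s,a}$ for different $h$ are mutually independent (entries of one $\mathcal R_h$ may be arbitrarily correlated); rewards are independent of transitions, and transitions are independent across steps. Let $r_h(s,a)=\mathbb E[R_h(s,a)]$ and let $\mathcal D(r)$ denote the set of all such reward distributions with means $r$. For $L\in\{0,\dots,H\}$ an $L$-lookahead policy draws $a_h\sim\pi_h(\cdot\mid s_h,\mathcal R_h^L)$, where $\mathcal R_h^L=(\mathcal R_t)_{h\le t\le\min(h+L-1,H)}$ and $\mathcal R_h^0=\emptyset$; $\Pi^L$ is the set of these policies. The value is $V^{L,\pi}(P,r)=\mathbb E[\sum_{h=1}^H R_h(s_h,a_h)]$, and $V^{L,*}(P,r)=\sup_{\pi\in\Pi^L}V^{L,\pi}(P,r)$. The competitive ratio is $CR^L(P,r)=\inf_{\mathcal D(r)}V^{0,*}(P,r)/V^{L,*}(P,r)$, with the convention that any division by zero equals $+\infty$.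 *)

theory Defs
  imports "HOL-Probability.Probability"
begin

definition rew_space :: "'s set \<Rightarrow> 'a set \<Rightarrow> ('s \<times> 'a \<Rightarrow> real) measure" where
  "rew_space S A = PiM (S \<times> A) (\<lambda>_. borel)"

text \<open>D(r): the per-step reward vectors R_1,...,R_H are mutually independent
  (their joint law is the product of the laws nu h), entries of one R_h may be
  arbitrarily correlated; rewards are a.s. non-negative with means r.\<close>

definition reward_dists ::
  "'s set \<Rightarrow> 'a set \<Rightarrow> nat \<Rightarrow> (nat \<Rightarrow> 's \<Rightarrow> 'a \<Rightarrow> real)
     \<Rightarrow> (nat \<Rightarrow> ('s \<times> 'a \<Rightarrow> real) measure) set" where
  "reward_dists S A H r = {\<nu>. \<forall>h\<in>{1..H}.
      prob_space (\<nu> h) \<and> sets (\<nu> h) = sets (rew_space S A) \<and>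
      (\<forall>s\<in>S. \<forall>a\<in>A. integrable (\<nu> h) (\<lambda>x. x (s, a)) \<and>
                     (AE x in \<nu> h. 0 \<le> x (s, a)) \<and>
                     (\<integral>x. x (s, a) \<partial>\<nu> h) = r h s a)}"

text \<open>L-lookahead policies: a_h ~ pi h s_h rho, where pi h s rho may only depend
  on the reward vectors rho t with h <= t <= min (h+L-1) H (for L = 0: on none),
  and is measurable in the rewards.\<close>

definition lookahead_policies ::
  "'s set \<Rightarrow> 'a set \<Rightarrow> nat \<Rightarrow> nat
     \<Rightarrow> (nat \<Rightarrow> 's \<Rightarrow> (nat \<Rightarrow> 's \<times> 'a \<Rightarrow> real) \<Rightarrow> 'a pmf) set" where
  "lookahead_policies S A H L = {\<pi>. \<forall>h\<in>{1..H}. \<forall>s\<in>S.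
      (\<forall>\<rho>. set_pmf (\<pi> h s \<rho>) \<subseteq> A) \<and>
      (\<forall>\<rho> \<rho>'. (\<forall>t. h \<le> t \<and> t \<le> min (h + L - 1) H \<longrightarrow> \<rho> t = \<rho>' t)
                 \<longrightarrow> \<pi> h s \<rho> = \<pi> h s \<rho>') \<and>
      (\<forall>a. (\<lambda>\<rho>. pmf (\<pi> h s \<rho>) a) \<in> borel_measurable (PiM {1..H} (\<lambda>_. rew_space S A)))}"

text \<open>Expected return collected from step h in state s during k remaining steps,
  conditional on the (pre-drawn) reward realization rho.\<close>

fun cond_return ::
  "nat \<Rightarrow> 'a set \<Rightarrow> (nat \<Rightarrow> 's \<Rightarrow> 'a \<Rightarrow> 's pmf)
     \<Rightarrow> (nat \<Rightarrow> 's \<Rightarrow> (nat \<Rightarrow> 's \<times> 'a \<Rightarrow> real) \<Rightarrow> 'a pmf)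
     \<Rightarrow> (nat \<Rightarrow> 's \<times> 'a \<Rightarrow> real) \<Rightarrow> nat \<Rightarrow> 's \<Rightarrow> real" where
  "cond_return 0 A P \<pi> \<rho> h s = 0"
| "cond_return (Suc k) A P \<pi> \<rho> h s =
     (\<Sum>a\<in>A. pmf (\<pi> h s \<rho>) a *
        (\<rho> h (s, a) + measure_pmf.expectation (P h s a) (\<lambda>s'. cond_return k A P \<pi> \<rho> (Suc h) s')))"

text \<open>V^{L,pi}(P,r) = E[sum_h R_h(s_h,a_h)]: average of the conditional return
  over the product law of the reward vectors.\<close>

definition mdp_value ::
  "'s set \<Rightarrow> 'a set \<Rightarrow> nat \<Rightarrow> (nat \<Rightarrow> 's \<Rightarrow> 'a \<Rightarrow> 's pmf) \<Rightarrow> 's pmf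
     \<Rightarrow> (nat \<Rightarrow> 's \<Rightarrow> (nat \<Rightarrow> 's \<times> 'a \<Rightarrow> real) \<Rightarrow> 'a pmf)
     \<Rightarrow> (nat \<Rightarrow> ('s \<times> 'a \<Rightarrow> real) measure) \<Rightarrow> ennreal" where
  "mdp_value S A H P \<mu> \<pi> \<nu> =
     (\<integral>\<^sup>+\<rho>. ennreal (measure_pmf.expectation \<mu> (\<lambda>s. cond_return H A P \<pi> \<rho> 1 s)) \<partial>(PiM {1..H} \<nu>))"

definition opt_value ::
  "'s set \<Rightarrow> 'a set \<Rightarrow> nat \<Rightarrow> (nat \<Rightarrow> 's \<Rightarrow> 'a \<Rightarrow> 's pmf) \<Rightarrow> 's pmf \<Rightarrow> nat
     \<Rightarrow> (nat \<Rightarrow> ('s \<times> 'a \<Rightarrow> real) measure) \<Rightarrow> ennreal" where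
  "opt_value S A H P \<mu> L \<nu> = (SUP \<pi> \<in> lookahead_policies S A H L. mdp_value S A H P \<mu> \<pi> \<nu>)"

definition ratio :: "ennreal \<Rightarrow> ennreal \<Rightarrow> ennreal" where
  "ratio x y = (if y = 0 then \<top> else x / y)"

definition comp_ratio ::
  "'s set \<Rightarrow> 'a set \<Rightarrow> nat \<Rightarrow> (nat \<Rightarrow> 's \<Rightarrow> 'a \<Rightarrow> 's pmf) \<Rightarrow> 's pmf \<Rightarrow> nat
     \<Rightarrow> (nat \<Rightarrow> 's \<Rightarrow> 'a \<Rightarrow> real) \<Rightarrow> ennreal" where
  "comp_ratio S A H P \<mu> L r =
     (INF \<nu> \<in> reward_dists S A H r. ratio (opt_value S A H P \<mu> 0 \<nu>) (opt_value S A H P \<mu> L \<nu>))"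

text \<open>The chain MDP: states s_1..s_H (CS k) and absorbing terminal state CT.\<close>

datatype chain_state = CS nat | CT

definition chain_states :: "nat \<Rightarrow> chain_state set" where
  "chain_states H = CS ` {1..H} \<union> {CT}"

definition chain_P :: "nat \<Rightarrow> 'a \<Rightarrow> nat \<Rightarrow> chain_state \<Rightarrow> 'a \<Rightarrow> chain_state pmf" where
  "chain_P H a1 h s a = (case s of
       CS k \<Rightarrow> (if k < H \<and> a = a1 then return_pmf (CS (Suc k)) else return_pmf CT)
     | CT \<Rightarrow> return_pmf CT)"

definition chain_mu :: "chain_state pmf" where
  "chain_mu = return_pmf (CS 1)"

end

theory Submission
  imports Defs
begin

definition nxt :: "nat \<Rightarrow> 'a \<Rightarrow> chain_state \<Rightarrow> 'a \<Rightarrow> chain_state" where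
  "nxt H a1 s a = (case s of CS k \<Rightarrow> (if k < H \<and> a = a1 then CS (Suc k) else CT) | CT \<Rightarrow> CT)"

lemma chain_P_eq: "chain_P H a1 h s a = return_pmf (nxt H a1 s a)"
  by (simp add: chain_P_def nxt_def split: chain_state.split)

lemma cond_return_Suc':
  "cond_return (Suc k) A (chain_P H a1) \<pi> \<rho> h s =
     (\<Sum>a\<in>A. pmf (\<pi> h s \<rho>) a * (\<rho> h (s, a) + cond_return k A (chain_P H a1) \<pi> \<rho> (Suc h) (nxt H a1 s a)))"
  by (simp add: chain_P_eq)

lemma nxt_S: "s \<in> chain_states H \<Longrightarrow> nxt H a1 s a \<in> chain_states H"
  by (auto simp: nxt_def chain_states_def split: chain_state.split)

lemma nxt_CS: "nxt H a1 (CS h) a = (if h < H \<and> a = a1 then CS (Suc h) else CT)"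
  by (simp add: nxt_def)

lemma nxt_CT: "nxt H a1 CT a = CT"
  by (simp add: nxt_def)

lemma find_single:
  "(\<forall>b\<in>set xs. b \<noteq> a \<longrightarrow> \<not> P b) \<Longrightarrow> find P xs = (if a \<in> set xs \<and> P a then Some a else None)"
  by (induction xs) auto

lemma policy_sum:
  assumes "\<pi> \<in> lookahead_policies S A H L" "h \<in> {1..H}" "s \<in> S" "finite A"
  shows "(\<Sum>a\<in>A. pmf (\<pi> h s \<rho>) a) = 1"
  using assms by (intro sum_pmf_eq_1) (auto simp: lookahead_policies_def)

lemma find_meas:
  fixes g :: "'x \<Rightarrow> 'b \<Rightarrow> real"
  assumes "\<And>b. b \<in> set ys \<Longrightarrow> (\<lambda>x. g x b) \<in> borel_measurable M"
  shows "(\<lambda>x. find (\<lambda>b. g x b > 0) ys) \<in> measurable M (count_space UNIV)"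
  using assms
proof (induction ys)
  case Nil
  then show ?case by simp
next
  case (Cons y ys)
  have m[measurable]: "(\<lambda>x. g x y) \<in> borel_measurable M" using Cons.prems by auto
  have "(\<lambda>x. if g x y > 0 then Some y else find (\<lambda>b. g x b > 0) ys) \<in> measurable M (count_space UNIV)"
    by (rule measurable_If) (use Cons in auto)
  then show ?case by simp
qed

lemma prod_split:
  fixes f :: "nat \<Rightarrow> 'c::comm_monoid_mult"
  assumes t: "t \<in> {1..H}"
  shows "(\<Prod>i\<in>{1..H}. if i < t then f i else if i = t then w else 1) = (\<Prod>i\<in>{1..<t}. f i) * w"
proof -
  have U: "{1..H} = {1..<t} \<union> {t..H}" using t by auto
  have "(\<Prod>i\<in>{1..H}. if i < t then f i else if i = t then w else 1)
      = (\<Prod>i\<in>{1..<t}. if i < t then f i else if i = t then w else 1) * (\<Prod>i\<in>{t..H}. if i < t then f i else if i = t then w else 1)"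
    unfolding U by (rule prod.union_disjoint) auto
  also have "(\<Prod>i\<in>{1..<t}. if i < t then f i else if i = t then w else 1) = (\<Prod>i\<in>{1..<t}. f i)"
    by (intro prod.cong) auto
  also have "(\<Prod>i\<in>{t..H}. if i < t then f i else if i = t then w else 1) = w * (\<Prod>i\<in>{Suc t..H}. if i < t then f i else if i = t then w else 1)"
    using t by (simp add: prod.atLeast_Suc_atMost)
  also have "(\<Prod>i\<in>{Suc t..H}. if i < t then f i else if i = t then w else 1) = 1"
    by (intro prod.neutral) auto
  finally show ?thesis by simp
qed

locale chain_setup =
  fixes Acts :: "'a set" and a1 :: 'a and H :: nat
    and r :: "nat \<Rightarrow> chain_state \<Rightarrow> 'a \<Rightarrow> real"
  assumes fin: "finite Acts" and card2: "card Acts \<ge> 2" and a1A: "a1 \<in> Acts" and H1: "H \<ge> 1"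
    and rnn: "\<forall>h\<in>{1..H}. \<forall>s\<in>chain_states H. \<forall>a\<in>Acts. 0 \<le> r h s a"
    and ra1: "\<forall>h\<in>{1..H}. \<forall>k\<in>{1..H}. r h (CS k) a1 = 0"
    and rCT: "\<forall>h\<in>{1..H}. \<forall>a\<in>Acts. r h CT a = 0"
    and rex: "\<exists>k\<in>{1..H}. \<exists>a\<in>Acts - {a1}. r k (CS k) a \<noteq> 0"
begin

abbreviation "S \<equiv> chain_states H"
abbreviation "PP \<equiv> chain_P H a1"
abbreviation "CR k \<rho> h s \<pi> \<equiv> cond_return k Acts PP \<pi> \<rho> h s"

definition U :: "(nat \<Rightarrow> chain_state \<times> 'a \<Rightarrow> real) \<Rightarrow> nat \<Rightarrow> real" where
  "U \<rho> h = (\<Sum>t\<in>{h..H}. \<Sum>a\<in>Acts. (max 0 (\<rho> t (CS t, a)) + max 0 (\<rho> t (CT, a))))"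

lemma U_nonneg: "0 \<le> U \<rho> h"
  unfolding U_def by (intro sum_nonneg) auto

lemma U_bound:
  assumes pol: "\<pi> \<in> lookahead_policies S Acts H L"
  shows "1 \<le> h \<Longrightarrow> h + k \<le> H + 1 \<Longrightarrow> s = CS h \<or> s = CT \<Longrightarrow> CR k \<rho> h s \<pi> \<le> U \<rho> h"
proof (induction k arbitrary: h s)
  case 0
  then show ?case by (simp add: U_nonneg)
next
  case (Suc k)
  have hH: "h \<le> H" using Suc.prems by auto
  have sS: "s \<in> S" using Suc.prems hH by (auto simp: chain_states_def)
  define R where "R = (\<Sum>a\<in>Acts. (max 0 (\<rho> h (CS h, a)) + max 0 (\<rho> h (CT, a))))"
  have Ueq: "U \<rho> h = R + U \<rho> (Suc h)"
    unfolding U_def R_def using hH by (simp add: sum.atLeast_Suc_atMost)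
  have tm: "\<rho> h (s, a) + CR k \<rho> (Suc h) (nxt H a1 s a) \<pi> \<le> U \<rho> h" if a: "a \<in> Acts" for a
  proof -
    have "\<rho> h (s, a) \<le> max 0 (\<rho> h (CS h, a)) + max 0 (\<rho> h (CT, a))"
      using Suc.prems(3) by auto
    also have "\<dots> \<le> R" unfolding R_def
      by (rule member_le_sum[where f="\<lambda>a. max 0 (\<rho> h (CS h, a)) + max 0 (\<rho> h (CT, a))"]) (use a fin in auto)
    finally have 1: "\<rho> h (s, a) \<le> R" .
    have "nxt H a1 s a = CS (Suc h) \<or> nxt H a1 s a = CT"
      using Suc.prems(3) by (auto simp: nxt_def split: if_splits)
    then have 2: "CR k \<rho> (Suc h) (nxt H a1 s a) \<pi> \<le> U \<rho> (Suc h)"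
      using Suc.prems by (intro Suc.IH) auto
    show ?thesis using 1 2 Ueq by linarith
  qed
  have "CR (Suc k) \<rho> h s \<pi> = (\<Sum>a\<in>Acts. pmf (\<pi> h s \<rho>) a * (\<rho> h (s, a) + CR k \<rho> (Suc h) (nxt H a1 s a) \<pi>))"
    by (rule cond_return_Suc')
  also have "\<dots> \<le> (\<Sum>a\<in>Acts. pmf (\<pi> h s \<rho>) a * U \<rho> h)"
    by (intro sum_mono mult_left_mono tm) auto
  also have "\<dots> = U \<rho> h"
    using policy_sum[OF pol _ sS fin, of h \<rho>] Suc.prems hH by (simp add: sum_distrib_right[symmetric])
  finally show ?case .
qed

definition nu' :: "(nat \<Rightarrow> ('s \<times> 'b \<Rightarrow> real) measure) \<Rightarrow> nat \<Rightarrow> ('s \<times> 'b \<Rightarrow> real) measure" where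
  "nu' \<nu> i = \<nu> (if i \<in> {1..H} then i else 1)"

lemma PiM_nu': "PiM {1..H} \<nu> = PiM {1..H} (nu' \<nu>)"
  by (rule PiM_cong) (auto simp: nu'_def)

lemma D_prob: "\<nu> \<in> reward_dists S Acts H r \<Longrightarrow> t \<in> {1..H} \<Longrightarrow> prob_space (\<nu> t)"
  by (auto simp: reward_dists_def)

lemma D_sets: "\<nu> \<in> reward_dists S Acts H r \<Longrightarrow> t \<in> {1..H} \<Longrightarrow> sets (\<nu> t) = sets (rew_space S Acts)"
  by (auto simp: reward_dists_def)

lemma prod_ps:
  assumes "\<nu> \<in> reward_dists S Acts H r"
  shows "product_prob_space (nu' \<nu>)"
proof -
  have p: "prob_space (nu' \<nu> i)" for i
    using D_prob[OF assms] H1 by (auto simp: nu'_def)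
  show ?thesis
    by (intro product_prob_space.intro product_sigma_finite.intro product_prob_space_axioms.intro)
       (auto simp: p prob_space_imp_sigma_finite)
qed

lemma coord_meas: "(s, a) \<in> S' \<times> A' \<Longrightarrow> (\<lambda>x. x (s, a)) \<in> borel_measurable (rew_space S' A')"
  unfolding rew_space_def by (rule measurable_component_singleton) auto

lemma comp_distr:
  assumes "\<nu> \<in> reward_dists S Acts H r" "t \<in> {1..H}"
  shows "distr (PiM {1..H} \<nu>) (\<nu> t) (\<lambda>\<omega>. \<omega> t) = \<nu> t"
proof -
  interpret product_prob_space "nu' \<nu>" "{1..H}" by (rule prod_ps[OF assms(1)])
  have "distr (PiM {1..H} (nu' \<nu>)) (nu' \<nu> t) (\<lambda>\<omega>. \<omega> t) = nu' \<nu> t"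
    by (rule PiM_component) (use assms in auto)
  moreover have "nu' \<nu> t = \<nu> t" using assms(2) by (simp add: nu'_def)
  moreover have "PiM {1..H} \<nu> = PiM {1..H} (nu' \<nu>)" by (rule PiM_nu')
  ultimately show ?thesis by simp
qed

lemma comp_meas:
  assumes "t \<in> {1..H}"
  shows "(\<lambda>\<omega>. \<omega> t) \<in> measurable (PiM {1..H} \<nu>) (\<nu> t)"
  by (rule measurable_component_singleton) (use assms in auto)

lemma nn_comp:
  assumes "\<nu> \<in> reward_dists S Acts H r" "t \<in> {1..H}" "g \<in> borel_measurable (rew_space S Acts)"
  shows "(\<integral>\<^sup>+\<rho>. g (\<rho> t) \<partial>PiM {1..H} \<nu>) = (\<integral>\<^sup>+x. g x \<partial>\<nu> t)"
proof -
  have g: "g \<in> borel_measurable (\<nu> t)"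
    using assms(3) measurable_cong_sets[OF D_sets[OF assms(1,2)] refl] by blast
  have "(\<integral>\<^sup>+x. g x \<partial>\<nu> t) = (\<integral>\<^sup>+x. g x \<partial>distr (PiM {1..H} \<nu>) (\<nu> t) (\<lambda>\<omega>. \<omega> t))"
    using comp_distr[OF assms(1,2)] by simp
  also have "\<dots> = (\<integral>\<^sup>+\<rho>. g (\<rho> t) \<partial>PiM {1..H} \<nu>)"
    by (rule nn_integral_distr[OF comp_meas[OF assms(2)]]) (simp add: g)
  finally show ?thesis by simp
qed

lemma int_comp:
  fixes g :: "_ \<Rightarrow> real"
  assumes "\<nu> \<in> reward_dists S Acts H r" "t \<in> {1..H}" "g \<in> borel_measurable (rew_space S Acts)"
    and "integrable (\<nu> t) g"
  shows "integrable (PiM {1..H} \<nu>) (\<lambda>\<rho>. g (\<rho> t)) \<and> (\<integral>\<rho>. g (\<rho> t) \<partial>PiM {1..H} \<nu>) = (\<integral>x. g x \<partial>\<nu> t)"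
proof -
  have g: "g \<in> borel_measurable (\<nu> t)"
    using assms(3) measurable_cong_sets[OF D_sets[OF assms(1,2)] refl] by blast
  have "integrable (distr (PiM {1..H} \<nu>) (\<nu> t) (\<lambda>\<omega>. \<omega> t)) g"
    using assms(4) using comp_distr[OF assms(1,2)] by simp
  then have i: "integrable (PiM {1..H} \<nu>) (\<lambda>\<rho>. g (\<rho> t))"
    using integrable_distr_eq[OF comp_meas[OF assms(2), of \<nu>] g] by simp
  have "(\<integral>x. g x \<partial>\<nu> t) = (\<integral>x. g x \<partial>distr (PiM {1..H} \<nu>) (\<nu> t) (\<lambda>\<omega>. \<omega> t))"
    using comp_distr[OF assms(1,2)] by simp
  also have "\<dots> = (\<integral>\<rho>. g (\<rho> t) \<partial>PiM {1..H} \<nu>)"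
    by (rule integral_distr[OF comp_meas[OF assms(2), of \<nu>] g])
  finally show ?thesis using i by simp
qed

lemma AE_comp:
  assumes "\<nu> \<in> reward_dists S Acts H r" "t \<in> {1..H}" "AE x in \<nu> t. P x"
  shows "AE \<rho> in PiM {1..H} \<nu>. P (\<rho> t)"
proof -
  interpret product_prob_space "nu' \<nu>" "{1..H}" by (rule prod_ps[OF assms(1)])
  have "AE \<rho> in PiM {1..H} (nu' \<nu>). P (\<rho> t)"
  proof (rule AE_component)
    show "t \<in> {1..H}" by (rule assms(2))
    have "nu' \<nu> t = \<nu> t" using assms(2) by (simp add: nu'_def)
    then show "AE x in nu' \<nu> t. P x" using assms(3) by metis
  qed
  then show ?thesis unfolding PiM_nu'[of \<nu>] .
qed

lemma AE_nonneg:
  assumes "\<nu> \<in> reward_dists S Acts H r"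
  shows "AE \<rho> in PiM {1..H} \<nu>. \<forall>t\<in>{1..H}. \<forall>s\<in>S. \<forall>a\<in>Acts. 0 \<le> \<rho> t (s, a)"
proof -
  have fS: "finite S" by (simp add: chain_states_def)
  show ?thesis
    apply (intro AE_finite_allI fS fin finite_atLeastAtMost)
    apply (rule AE_comp[OF assms, where P="\<lambda>x. 0 \<le> x (_, _)"])
    using assms by (auto simp: reward_dists_def)
qed

lemma mdp_value_eq:
  "mdp_value S Acts H PP chain_mu \<pi> \<nu> = (\<integral>\<^sup>+\<rho>. ennreal (CR H \<rho> 1 (CS 1) \<pi>) \<partial>PiM {1..H} \<nu>)"
  by (simp add: mdp_value_def chain_mu_def)

lemma CR_nonneg:
  assumes nn: "\<forall>t\<in>{1..H}. \<forall>s\<in>S. \<forall>a\<in>Acts. 0 \<le> \<rho> t (s, a)"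
  shows "1 \<le> h \<Longrightarrow> h + k \<le> H + 1 \<Longrightarrow> s \<in> S \<Longrightarrow> 0 \<le> CR k \<rho> h s \<pi>"
proof (induction k arbitrary: h s)
  case 0
  then show ?case by simp
next
  case (Suc k)
  have "0 \<le> (\<Sum>a\<in>Acts. pmf (\<pi> h s \<rho>) a * (\<rho> h (s, a) + CR k \<rho> (Suc h) (nxt H a1 s a) \<pi>))"
  proof (intro sum_nonneg mult_nonneg_nonneg add_nonneg_nonneg)
    fix a assume a: "a \<in> Acts"
    show "0 \<le> \<rho> h (s, a)" using nn Suc.prems a by auto
    show "0 \<le> CR k \<rho> (Suc h) (nxt H a1 s a) \<pi>"
      using Suc.prems by (intro Suc.IH nxt_S) auto
  qed simp
  then show ?case by (simp only: cond_return_Suc')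
qed

lemma meas_entry:
  assumes "\<nu> \<in> reward_dists S Acts H r" "t \<in> {1..H}" "s \<in> S" "a \<in> Acts"
  shows "(\<lambda>\<rho>. \<rho> t (s, a)) \<in> borel_measurable (PiM {1..H} \<nu>)"
proof -
  have "(\<lambda>x. x (s, a)) \<in> borel_measurable (\<nu> t)"
    using coord_meas[of s a S Acts] assms measurable_cong_sets[OF D_sets[OF assms(1,2)] refl] by blast
  from measurable_compose[OF comp_meas[OF assms(2), of \<nu>] this] show ?thesis by simp
qed

lemma nn_entry:
  assumes "\<nu> \<in> reward_dists S Acts H r" "t \<in> {1..H}" "s \<in> S" "a \<in> Acts"
  shows "(\<integral>\<^sup>+\<rho>. ennreal (\<rho> t (s, a)) \<partial>PiM {1..H} \<nu>) = ennreal (r t s a)"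
proof -
  have c[measurable]: "(\<lambda>x. x (s, a)) \<in> borel_measurable (rew_space S Acts)"
    using coord_meas[of s a S Acts] assms by auto
  have m: "(\<lambda>x. ennreal (x (s, a))) \<in> borel_measurable (rew_space S Acts)"
    by measurable
  have "(\<integral>\<^sup>+\<rho>. ennreal (\<rho> t (s, a)) \<partial>PiM {1..H} \<nu>) = (\<integral>\<^sup>+x. ennreal (x (s, a)) \<partial>\<nu> t)"
    by (rule nn_comp[OF assms(1,2) m])
  also have "\<dots> = ennreal (\<integral>x. x (s, a) \<partial>\<nu> t)"
    using assms by (intro nn_integral_eq_integral) (auto simp: reward_dists_def)
  also have "\<dots> = ennreal (r t s a)"
    using assms by (auto simp: reward_dists_def)
  finally show ?thesis .
qed

lemma ennsum: "(\<And>i. i \<in> I \<Longrightarrow> 0 \<le> f i) \<Longrightarrow> ennreal (sum f I) = (\<Sum>i\<in>I. ennreal (f i))"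
  by simp

definition Sum :: real where "Sum = (\<Sum>k=1..H. \<Sum>a\<in>Acts. r k (CS k) a)"

lemma value_upper:
  assumes nu: "\<nu> \<in> reward_dists S Acts H r" and pol: "\<pi> \<in> lookahead_policies S Acts H L"
  shows "mdp_value S Acts H PP chain_mu \<pi> \<nu> \<le> ennreal Sum"
proof -
  have CSS: "t \<in> {1..H} \<Longrightarrow> CS t \<in> S" for t by (auto simp: chain_states_def)
  have CTS: "CT \<in> S" by (auto simp: chain_states_def)
  have "mdp_value S Acts H PP chain_mu \<pi> \<nu> = (\<integral>\<^sup>+\<rho>. ennreal (CR H \<rho> 1 (CS 1) \<pi>) \<partial>PiM {1..H} \<nu>)"
    by (rule mdp_value_eq)
  also have "\<dots> \<le> (\<integral>\<^sup>+\<rho>. ennreal (U \<rho> 1) \<partial>PiM {1..H} \<nu>)"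
    by (intro nn_integral_mono ennreal_leI U_bound[OF pol]) auto
  also have "\<dots> = (\<integral>\<^sup>+\<rho>. (\<Sum>t\<in>{1..H}. \<Sum>a\<in>Acts. (ennreal (\<rho> t (CS t, a)) + ennreal (\<rho> t (CT, a)))) \<partial>PiM {1..H} \<nu>)"
    by (intro nn_integral_cong) (simp add: U_def ennsum sum_nonneg ennreal_plus ennreal_max_0 del: sum_ennreal)
  also have "\<dots> = (\<Sum>t\<in>{1..H}. \<Sum>a\<in>Acts. ((\<integral>\<^sup>+\<rho>. ennreal (\<rho> t (CS t, a)) \<partial>PiM {1..H} \<nu>) + (\<integral>\<^sup>+\<rho>. ennreal (\<rho> t (CT, a)) \<partial>PiM {1..H} \<nu>)))"
  proof -
    have m1: "(\<lambda>\<rho>. ennreal (\<rho> t (CS t, a))) \<in> borel_measurable (PiM {1..H} \<nu>)"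
      if "t \<in> {1..H}" "a \<in> Acts" for t a
      using meas_entry[OF nu that(1) CSS[OF that(1)] that(2)] by measurable
    have m2: "(\<lambda>\<rho>. ennreal (\<rho> t (CT, a))) \<in> borel_measurable (PiM {1..H} \<nu>)"
      if "t \<in> {1..H}" "a \<in> Acts" for t a
      using meas_entry[OF nu that(1) CTS that(2)] by measurable
    have "(\<integral>\<^sup>+\<rho>. (\<Sum>t\<in>{1..H}. \<Sum>a\<in>Acts. (ennreal (\<rho> t (CS t, a)) + ennreal (\<rho> t (CT, a)))) \<partial>PiM {1..H} \<nu>)
      = (\<Sum>t\<in>{1..H}. (\<integral>\<^sup>+\<rho>. (\<Sum>a\<in>Acts. (ennreal (\<rho> t (CS t, a)) + ennreal (\<rho> t (CT, a)))) \<partial>PiM {1..H} \<nu>))"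
      by (rule nn_integral_sum) (use m1 m2 in auto)
    also have "\<dots> = (\<Sum>t\<in>{1..H}. \<Sum>a\<in>Acts. ((\<integral>\<^sup>+\<rho>. ennreal (\<rho> t (CS t, a)) \<partial>PiM {1..H} \<nu>) + (\<integral>\<^sup>+\<rho>. ennreal (\<rho> t (CT, a)) \<partial>PiM {1..H} \<nu>)))"
    proof (rule sum.cong[OF refl])
      fix t assume t: "t \<in> {1..H}"
      have "(\<integral>\<^sup>+\<rho>. (\<Sum>a\<in>Acts. (ennreal (\<rho> t (CS t, a)) + ennreal (\<rho> t (CT, a)))) \<partial>PiM {1..H} \<nu>)
        = (\<Sum>a\<in>Acts. (\<integral>\<^sup>+\<rho>. (ennreal (\<rho> t (CS t, a)) + ennreal (\<rho> t (CT, a))) \<partial>PiM {1..H} \<nu>))"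
        by (rule nn_integral_sum) (use m1 m2 t in auto)
      also have "\<dots> = (\<Sum>a\<in>Acts. ((\<integral>\<^sup>+\<rho>. ennreal (\<rho> t (CS t, a)) \<partial>PiM {1..H} \<nu>) + (\<integral>\<^sup>+\<rho>. ennreal (\<rho> t (CT, a)) \<partial>PiM {1..H} \<nu>)))"
        by (rule sum.cong[OF refl], rule nn_integral_add) (use m1 m2 t in auto)
      finally show "(\<integral>\<^sup>+\<rho>. (\<Sum>a\<in>Acts. (ennreal (\<rho> t (CS t, a)) + ennreal (\<rho> t (CT, a)))) \<partial>PiM {1..H} \<nu>)
        = (\<Sum>a\<in>Acts. ((\<integral>\<^sup>+\<rho>. ennreal (\<rho> t (CS t, a)) \<partial>PiM {1..H} \<nu>) + (\<integral>\<^sup>+\<rho>. ennreal (\<rho> t (CT, a)) \<partial>PiM {1..H} \<nu>)))" .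
    qed
    finally show ?thesis .
  qed
  also have "\<dots> = (\<Sum>t\<in>{1..H}. \<Sum>a\<in>Acts. ennreal (r t (CS t) a))"
    apply (intro sum.cong refl)
    subgoal for t a using nn_entry[OF nu, of t "CS t" a] nn_entry[OF nu, of t CT a] CSS[of t] CTS rCT by simp
    done
  also have "\<dots> = ennreal Sum"
    unfolding Sum_def using rnn CSS by (subst sum_ennreal[symmetric]) (auto intro!: sum_nonneg)
  finally show ?thesis .
qed

definition rbar :: "nat \<Rightarrow> chain_state \<times> 'a \<Rightarrow> real" where
  "rbar t p = r t (fst p) (snd p)"

lemma rbar_app: "rbar t (s, a) = r t s a"
  by (simp add: rbar_def)

lemma rbar_nonneg: "\<forall>t\<in>{1..H}. \<forall>s\<in>S. \<forall>a\<in>Acts. 0 \<le> rbar t (s, a)"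
  using rnn by (simp add: rbar_def)

lemma pol0_indep:
  assumes "\<pi> \<in> lookahead_policies S Acts H 0" "h \<in> {1..H}" "s \<in> S"
  shows "\<pi> h s \<rho> = \<pi> h s \<rho>'"
proof -
  have "\<forall>\<rho> \<rho>'. (\<forall>t. h \<le> t \<and> t \<le> min (h + 0 - 1) H \<longrightarrow> \<rho> t = \<rho>' t) \<longrightarrow> \<pi> h s \<rho> = \<pi> h s \<rho>'"
    using assms unfolding lookahead_policies_def by blast
  moreover have "\<forall>t. h \<le> t \<and> t \<le> min (h + 0 - 1) H \<longrightarrow> \<rho> t = \<rho>' t" using assms(2) by auto
  ultimately show ?thesis by blast
qed

lemma V0_integral:
  assumes nu: "\<nu> \<in> reward_dists S Acts H r" and pol: "\<pi> \<in> lookahead_policies S Acts H 0"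
  shows "1 \<le> h \<Longrightarrow> h + k \<le> H + 1 \<Longrightarrow> s \<in> S \<Longrightarrow>
    integrable (PiM {1..H} \<nu>) (\<lambda>\<rho>. CR k \<rho> h s \<pi>) \<and> (\<integral>\<rho>. CR k \<rho> h s \<pi> \<partial>PiM {1..H} \<nu>) = CR k rbar h s \<pi>"
proof (induction k arbitrary: h s)
  case 0
  then show ?case by simp
next
  case (Suc k)
  have hH: "h \<in> {1..H}" using Suc.prems by auto
  define c where "c a = pmf (\<pi> h s rbar) a" for a
  have eq: "CR (Suc k) \<rho> h s \<pi> = (\<Sum>a\<in>Acts. c a * (\<rho> h (s, a) + CR k \<rho> (Suc h) (nxt H a1 s a) \<pi>))" for \<rho>
    unfolding cond_return_Suc' c_def using pol0_indep[OF pol hH Suc.prems(3)] by metis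
  have ent: "integrable (PiM {1..H} \<nu>) (\<lambda>\<rho>. \<rho> h (s, a)) \<and> (\<integral>\<rho>. \<rho> h (s, a) \<partial>PiM {1..H} \<nu>) = r h s a"
    if a: "a \<in> Acts" for a
  proof -
    have sa: "(s, a) \<in> S \<times> Acts" using a Suc.prems(3) by auto
    have I: "integrable (\<nu> h) (\<lambda>x. x (s, a))" using nu hH sa by (auto simp: reward_dists_def)
    have "integrable (PiM {1..H} \<nu>) (\<lambda>\<rho>. \<rho> h (s, a)) \<and> (\<integral>\<rho>. \<rho> h (s, a) \<partial>PiM {1..H} \<nu>) = (\<integral>x. x (s, a) \<partial>\<nu> h)"
      by (rule int_comp[OF nu hH coord_meas[OF sa] I])
    then show ?thesis using a Suc.prems(3) nu hH by (auto simp: reward_dists_def)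
  qed
  have IH: "integrable (PiM {1..H} \<nu>) (\<lambda>\<rho>. CR k \<rho> (Suc h) (nxt H a1 s a) \<pi>) \<and>
     (\<integral>\<rho>. CR k \<rho> (Suc h) (nxt H a1 s a) \<pi> \<partial>PiM {1..H} \<nu>) = CR k rbar (Suc h) (nxt H a1 s a) \<pi>" for a
    using Suc.prems by (intro Suc.IH nxt_S) auto
  have int: "integrable (PiM {1..H} \<nu>) (\<lambda>\<rho>. \<Sum>a\<in>Acts. c a * (\<rho> h (s, a) + CR k \<rho> (Suc h) (nxt H a1 s a) \<pi>))"
    by (intro Bochner_Integration.integrable_sum integrable_mult_right Bochner_Integration.integrable_add) (use ent IH in auto)
  have "(\<integral>\<rho>. (\<Sum>a\<in>Acts. c a * (\<rho> h (s, a) + CR k \<rho> (Suc h) (nxt H a1 s a) \<pi>)) \<partial>PiM {1..H} \<nu>)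
      = (\<Sum>a\<in>Acts. c a * ((\<integral>\<rho>. \<rho> h (s, a) \<partial>PiM {1..H} \<nu>) + (\<integral>\<rho>. CR k \<rho> (Suc h) (nxt H a1 s a) \<pi> \<partial>PiM {1..H} \<nu>)))"
    using ent IH by (subst Bochner_Integration.integral_sum) (auto intro!: sum.cong integrable_mult_right Bochner_Integration.integrable_add simp: Bochner_Integration.integral_add)
  also have "\<dots> = (\<Sum>a\<in>Acts. c a * (rbar h (s, a) + CR k rbar (Suc h) (nxt H a1 s a) \<pi>))"
    using ent IH by (intro sum.cong refl) (simp add: rbar_def)
  also have "\<dots> = CR (Suc k) rbar h s \<pi>"
    unfolding eq ..
  finally show ?case using int unfolding eq by simp
qed

lemma V0_value:
  assumes nu: "\<nu> \<in> reward_dists S Acts H r" and pol: "\<pi> \<in> lookahead_policies S Acts H 0"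
  shows "mdp_value S Acts H PP chain_mu \<pi> \<nu> = ennreal (CR H rbar 1 (CS 1) \<pi>)"
proof -
  have CS1: "CS 1 \<in> S" using H1 by (auto simp: chain_states_def)
  note V = V0_integral[OF nu pol, of 1 H "CS 1", OF _ _ CS1]
  have "mdp_value S Acts H PP chain_mu \<pi> \<nu> = (\<integral>\<^sup>+\<rho>. ennreal (CR H \<rho> 1 (CS 1) \<pi>) \<partial>PiM {1..H} \<nu>)"
    by (rule mdp_value_eq)
  also have "\<dots> = ennreal (\<integral>\<rho>. CR H \<rho> 1 (CS 1) \<pi> \<partial>PiM {1..H} \<nu>)"
  proof (rule nn_integral_eq_integral)
    show "integrable (PiM {1..H} \<nu>) (\<lambda>\<rho>. CR H \<rho> 1 (CS 1) \<pi>)" using V by simp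
    show "AE \<rho> in PiM {1..H} \<nu>. 0 \<le> CR H \<rho> 1 (CS 1) \<pi>"
      using AE_nonneg[OF nu]
    proof eventually_elim
      case (elim \<rho>)
      show ?case using CR_nonneg[OF elim, of 1 H "CS 1" \<pi>] CS1 by simp
    qed
  qed
  also have "\<dots> = ennreal (CR H rbar 1 (CS 1) \<pi>)" using V by simp
  finally show ?thesis .
qed

definition M :: real where "M = (MAX (k, a) \<in> {1..H} \<times> Acts. r k (CS k) a)"

lemma M_ge: "t \<in> {1..H} \<Longrightarrow> a \<in> Acts \<Longrightarrow> r t (CS t) a \<le> M"
  unfolding M_def by (rule Max_ge) (use fin in force)+

lemma M_in: "\<exists>k\<in>{1..H}. \<exists>a\<in>Acts. M = r k (CS k) a"
proof -
  have "M \<in> (\<lambda>(k, a). r k (CS k) a) ` ({1..H} \<times> Acts)"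
    unfolding M_def using fin H1 a1A by (intro Max_in) auto
  then show ?thesis by auto
qed

lemma M_nonneg: "0 \<le> M"
  using M_ge[of 1 a1] H1 a1A ra1 by auto

lemma det_bound:
  assumes pol: "\<pi> \<in> lookahead_policies S Acts H L"
  shows "1 \<le> h \<Longrightarrow> h + k \<le> H + 1 \<Longrightarrow> s = CS h \<or> s = CT \<Longrightarrow> CR k rbar h s \<pi> \<le> (if s = CT then 0 else M)"
proof (induction k arbitrary: h s)
  case 0
  then show ?case by (simp add: M_nonneg)
next
  case (Suc k)
  have hH: "h \<in> {1..H}" using Suc.prems by auto
  have sS: "s \<in> S" using Suc.prems hH by (auto simp: chain_states_def)
  have tm: "rbar h (s, a) + CR k rbar (Suc h) (nxt H a1 s a) \<pi> \<le> (if s = CT then 0 else M)" if a: "a \<in> Acts" for a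
  proof -
    have IH: "CR k rbar (Suc h) (nxt H a1 s a) \<pi> \<le> (if nxt H a1 s a = CT then 0 else M)"
      using Suc.prems by (intro Suc.IH) (auto simp: nxt_def split: if_splits)
    show ?thesis
    proof (cases "s = CT")
      case True
      then show ?thesis using IH rCT hH a by (simp add: rbar_def nxt_CT)
    next
      case False
      then have s: "s = CS h" using Suc.prems by auto
      show ?thesis
      proof (cases "a = a1")
        case True
        then show ?thesis using IH ra1 hH s M_nonneg by (simp add: rbar_def split: if_splits)
      next
        case False
        then show ?thesis using IH M_ge[OF hH a] s by (simp add: rbar_def nxt_CS)
      qed
    qed
  qed
  have "CR (Suc k) rbar h s \<pi> = (\<Sum>a\<in>Acts. pmf (\<pi> h s rbar) a * (rbar h (s, a) + CR k rbar (Suc h) (nxt H a1 s a) \<pi>))"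
    by (rule cond_return_Suc')
  also have "\<dots> \<le> (\<Sum>a\<in>Acts. pmf (\<pi> h s rbar) a * (if s = CT then 0 else M))"
    by (intro sum_mono mult_left_mono tm) auto
  also have "\<dots> = (if s = CT then 0 else M)"
    using policy_sum[OF pol hH sS fin, of rbar] by (simp add: sum_distrib_right[symmetric])
  finally show ?case .
qed

lemma sum_return_pmf: "b \<in> A \<Longrightarrow> finite A \<Longrightarrow> (\<Sum>a\<in>A. pmf (return_pmf b) a * f a) = f b"
  by (simp add: indicator_def)

definition pistar :: "nat \<Rightarrow> 'a \<Rightarrow> nat \<Rightarrow> chain_state \<Rightarrow> (nat \<Rightarrow> chain_state \<times> 'a \<Rightarrow> real) \<Rightarrow> 'a pmf" where
  "pistar k0 a0 h s \<rho> = return_pmf (if s = CS k0 \<and> h = k0 then a0 else a1)"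

lemma pistar_pol: "a0 \<in> Acts \<Longrightarrow> pistar k0 a0 \<in> lookahead_policies S Acts H L"
  unfolding lookahead_policies_def pistar_def using a1A by auto

lemma pistar_lower:
  assumes k0: "k0 \<in> {1..H}" and a0: "a0 \<in> Acts"
  shows "1 \<le> h \<Longrightarrow> h \<le> k0 \<Longrightarrow> h + k = H + 1 \<Longrightarrow> r k0 (CS k0) a0 \<le> CR k rbar h (CS h) (pistar k0 a0)"
proof (induction k arbitrary: h)
  case 0
  then show ?case using k0 by simp
next
  case (Suc k)
  have hH: "h \<in> {1..H}" using Suc.prems k0 by auto
  have eq: "CR (Suc k) rbar h (CS h) (pistar k0 a0) = (\<Sum>a\<in>Acts. pmf (pistar k0 a0 h (CS h) rbar) a * (rbar h (CS h, a) + CR k rbar (Suc h) (nxt H a1 (CS h) a) (pistar k0 a0)))"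
    by (rule cond_return_Suc')
  define b where "b = (if h = k0 then a0 else a1)"
  have eq2: "CR (Suc k) rbar h (CS h) (pistar k0 a0) = rbar h (CS h, b) + CR k rbar (Suc h) (nxt H a1 (CS h) b) (pistar k0 a0)"
  proof -
    have pe: "pistar k0 a0 h (CS h) rbar = return_pmf b" by (simp add: pistar_def b_def)
    show ?thesis unfolding eq pe by (intro sum_return_pmf) (use a0 a1A fin b_def in auto)
  qed
  show ?case
  proof (cases "h = k0")
    case True
    have "0 \<le> CR k rbar (Suc h) (nxt H a1 (CS h) a0) (pistar k0 a0)"
      using Suc.prems hH by (intro CR_nonneg[OF rbar_nonneg] nxt_S) (auto simp: chain_states_def)
    then show ?thesis using True eq2 by (simp add: b_def rbar_app del: cond_return.simps)
  next
    case False
    then have hk: "h < k0" using Suc.prems by auto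
    have "r k0 (CS k0) a0 \<le> CR k rbar (Suc h) (CS (Suc h)) (pistar k0 a0)"
      using Suc.prems hk by (intro Suc.IH) auto
    then show ?thesis using False eq2 hk k0 ra1 hH
      by (simp add: b_def rbar_app nxt_CS del: cond_return.simps)
  qed
qed

lemma V0_eq:
  assumes nu: "\<nu> \<in> reward_dists S Acts H r"
  shows "opt_value S Acts H PP chain_mu 0 \<nu> = ennreal M"
proof (rule antisym)
  show "opt_value S Acts H PP chain_mu 0 \<nu> \<le> ennreal M"
    unfolding opt_value_def
  proof (rule SUP_least)
    fix \<pi> assume pol: "\<pi> \<in> lookahead_policies S Acts H 0"
    have "CR H rbar 1 (CS 1) \<pi> \<le> M"
      using det_bound[OF pol, of 1 H "CS 1"] by simp
    then show "mdp_value S Acts H PP chain_mu \<pi> \<nu> \<le> ennreal M"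
      by (simp add: V0_value[OF nu pol] ennreal_leI)
  qed
next
  obtain k0 a0 where k0: "k0 \<in> {1..H}" and a0: "a0 \<in> Acts" and Meq: "M = r k0 (CS k0) a0"
    using M_in by blast
  have pol: "pistar k0 a0 \<in> lookahead_policies S Acts H 0" by (rule pistar_pol[OF a0])
  have "M \<le> CR H rbar 1 (CS 1) (pistar k0 a0)"
    unfolding Meq using pistar_lower[OF k0 a0, of 1 H] k0 by simp
  then have "ennreal M \<le> mdp_value S Acts H PP chain_mu (pistar k0 a0) \<nu>"
    by (simp add: V0_value[OF nu pol] ennreal_leI)
  also have "\<dots> \<le> opt_value S Acts H PP chain_mu 0 \<nu>"
    unfolding opt_value_def by (rule SUP_upper[OF pol])
  finally show "ennreal M \<le> opt_value S Acts H PP chain_mu 0 \<nu>" .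
qed

definition xs :: "'a list" where "xs = (SOME ys. set ys = Acts - {a1} \<and> distinct ys)"

lemma set_xs: "set xs = Acts - {a1}"
proof -
  have "\<exists>ys. set ys = Acts - {a1} \<and> distinct ys" using fin by (simp add: finite_distinct_list)
  then show ?thesis unfolding xs_def by (metis (mono_tags, lifting) someI_ex)
qed

definition sel :: "(chain_state \<times> 'a \<Rightarrow> real) \<Rightarrow> chain_state \<Rightarrow> 'a" where
  "sel x s = (case find (\<lambda>b. x (s, b) > 0) xs of None \<Rightarrow> a1 | Some b \<Rightarrow> b)"

definition pi1 :: "nat \<Rightarrow> chain_state \<Rightarrow> (nat \<Rightarrow> chain_state \<times> 'a \<Rightarrow> real) \<Rightarrow> 'a pmf" where
  "pi1 h s \<rho> = return_pmf (sel (\<rho> h) s)"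

lemma find_in: "find P xs = Some b \<Longrightarrow> b \<in> Acts - {a1}"
  using set_xs by (metis find_Some_iff nth_mem)

lemma sel_in: "sel x s \<in> Acts"
  unfolding sel_def using a1A find_in by (auto split: option.split)

lemma pi1_pol:
  assumes L: "1 \<le> L"
  shows "pi1 \<in> lookahead_policies S Acts H L"
  unfolding lookahead_policies_def
proof (intro CollectI ballI conjI allI impI)
  fix h s and \<rho> :: "nat \<Rightarrow> chain_state \<times> 'a \<Rightarrow> real" assume h: "h \<in> {1..H}" and sS: "s \<in> S"
  show "set_pmf (pi1 h s \<rho>) \<subseteq> Acts" by (simp add: pi1_def sel_in)
next
  fix h s and \<rho> \<rho>' :: "nat \<Rightarrow> chain_state \<times> 'a \<Rightarrow> real" assume h: "h \<in> {1..H}" and sS: "s \<in> S"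
    and eq: "\<forall>t. h \<le> t \<and> t \<le> min (h + L - 1) H \<longrightarrow> \<rho> t = \<rho>' t"
  then have "\<rho> h = \<rho>' h" using L by auto
  then show "pi1 h s \<rho> = pi1 h s \<rho>'" by (simp add: pi1_def)
next
  fix h s a assume h: "h \<in> {1..H}" and sS: "s \<in> S"
  let ?M = "PiM {1..H} (\<lambda>_. rew_space S Acts)"
  have e: "(\<lambda>\<rho>. \<rho> h (s, b)) \<in> borel_measurable ?M" if b: "b \<in> set xs" for b
  proof -
    have "(\<lambda>\<rho>. \<rho> h) \<in> measurable ?M (rew_space S Acts)"
      by (rule measurable_component_singleton) (use h in auto)
    moreover have "(\<lambda>x. x (s, b)) \<in> borel_measurable (rew_space S Acts)"
      by (rule coord_meas) (use b sS set_xs in auto)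
    ultimately show ?thesis by (rule measurable_compose)
  qed
  have f: "(\<lambda>\<rho>. find (\<lambda>b. \<rho> h (s, b) > 0) xs) \<in> measurable ?M (count_space UNIV)"
    by (rule find_meas[OF e])
  have "(\<lambda>\<rho>. (\<lambda>q. pmf (return_pmf (case q of None \<Rightarrow> a1 | Some b \<Rightarrow> b)) a) (find (\<lambda>b. \<rho> h (s, b) > 0) xs)) \<in> borel_measurable ?M"
    by (rule measurable_compose[OF f]) simp
  then show "(\<lambda>\<rho>. pmf (pi1 h s \<rho>) a) \<in> borel_measurable ?M"
    by (simp add: pi1_def sel_def)
qed

definition fnd :: "(chain_state \<times> 'a \<Rightarrow> real) \<Rightarrow> nat \<Rightarrow> 'a option" where
  "fnd x h = find (\<lambda>b. x (CS h, b) > 0) xs"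

definition Zf :: "nat \<Rightarrow> (chain_state \<times> 'a \<Rightarrow> real) \<Rightarrow> real" where
  "Zf h x = (if fnd x h = None then 1 else 0)"

definition Wf :: "nat \<Rightarrow> (chain_state \<times> 'a \<Rightarrow> real) \<Rightarrow> real" where
  "Wf h x = (case fnd x h of None \<Rightarrow> 0 | Some b \<Rightarrow> x (CS h, b))"

lemma find_P: "find P ys = Some b \<Longrightarrow> P b"
  by (metis find_Some_iff)

lemma Zf_nonneg: "0 \<le> Zf h x" by (simp add: Zf_def)

lemma Wf_nonneg: "0 \<le> Wf h x"
  unfolding Wf_def fnd_def by (auto split: option.split dest: find_P[where P="\<lambda>b. x (CS h, b) > 0"] simp: less_imp_le)

lemma pointwise_LB:
  assumes nn: "\<forall>t\<in>{1..H}. \<forall>s\<in>S. \<forall>a\<in>Acts. 0 \<le> \<rho> t (s, a)"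
  shows "1 \<le> h \<Longrightarrow> h + k = H + 1 \<Longrightarrow>
    (\<Sum>t\<in>{h..H}. (\<Prod>u\<in>{h..<t}. Zf u (\<rho> u)) * Wf t (\<rho> t)) \<le> CR k \<rho> h (CS h) pi1"
proof (induction k arbitrary: h)
  case 0
  then show ?case by simp
next
  case (Suc k)
  have hH: "h \<in> {1..H}" using Suc.prems by auto
  define c where "c = sel (\<rho> h) (CS h)"
  have cA: "c \<in> Acts" unfolding c_def by (rule sel_in)
  have eq: "CR (Suc k) \<rho> h (CS h) pi1 = \<rho> h (CS h, c) + CR k \<rho> (Suc h) (nxt H a1 (CS h) c) pi1"
    unfolding cond_return_Suc' pi1_def c_def[symmetric] by (rule sum_return_pmf[OF cA fin])
  define G where "G t = (\<Prod>u\<in>{Suc h..<t}. Zf u (\<rho> u)) * Wf t (\<rho> t)" for t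
  have split: "(\<Sum>t\<in>{h..H}. (\<Prod>u\<in>{h..<t}. Zf u (\<rho> u)) * Wf t (\<rho> t)) = Wf h (\<rho> h) + Zf h (\<rho> h) * (\<Sum>t\<in>{Suc h..H}. G t)"
  proof -
    have "(\<Sum>t\<in>{h..H}. (\<Prod>u\<in>{h..<t}. Zf u (\<rho> u)) * Wf t (\<rho> t)) = Wf h (\<rho> h) + (\<Sum>t\<in>{Suc h..H}. (\<Prod>u\<in>{h..<t}. Zf u (\<rho> u)) * Wf t (\<rho> t))"
      using hH by (simp add: sum.atLeast_Suc_atMost)
    also have "(\<Sum>t\<in>{Suc h..H}. (\<Prod>u\<in>{h..<t}. Zf u (\<rho> u)) * Wf t (\<rho> t)) = (\<Sum>t\<in>{Suc h..H}. Zf h (\<rho> h) * G t)"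
      by (intro sum.cong refl) (simp add: G_def prod.atLeast_Suc_lessThan)
    finally show ?thesis by (simp add: sum_distrib_left)
  qed
  have CRnn: "0 \<le> CR k \<rho> (Suc h) s pi1" if "s \<in> S" for s
    using Suc.prems that by (intro CR_nonneg[OF nn]) auto
  show ?case
  proof (cases "fnd (\<rho> h) h")
    case None
    then have c1: "c = a1" and Z: "Zf h (\<rho> h) = 1" and W: "Wf h (\<rho> h) = 0"
      by (simp_all add: c_def sel_def fnd_def Zf_def Wf_def)
    have r0: "0 \<le> \<rho> h (CS h, a1)" using nn hH a1A by (auto simp: chain_states_def)
    show ?thesis
    proof (cases "h < H")
      case True
      have "(\<Sum>t\<in>{Suc h..H}. G t) \<le> CR k \<rho> (Suc h) (CS (Suc h)) pi1"
        unfolding G_def using Suc.prems by (intro Suc.IH) auto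
      then show ?thesis unfolding split eq using Z W c1 True r0 by (simp add: nxt_CS)
    next
      case False
      then have "h = H" using hH by auto
      then show ?thesis unfolding split eq using Z W c1 r0 CRnn[of CT]
        by (simp add: chain_states_def nxt_CS)
    qed
  next
    case (Some b)
    then have cb: "c = b" and Z: "Zf h (\<rho> h) = 0" and W: "Wf h (\<rho> h) = \<rho> h (CS h, b)"
      by (simp_all add: c_def sel_def fnd_def Zf_def Wf_def)
    have "nxt H a1 (CS h) c \<in> S" by (rule nxt_S) (use hH in \<open>auto simp: chain_states_def\<close>)
    then show ?thesis unfolding split eq using Z W cb CRnn by simp
  qed
qed

definition nA :: real where "nA = real (card Acts)"

lemma nA_pos: "0 < nA" using card2 by (simp add: nA_def)

lemma Acts_ne: "Acts \<noteq> {}" using a1A by auto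

definition p0 :: "real \<Rightarrow> 'a option pmf" where
  "p0 \<theta> = bind_pmf (bernoulli_pmf \<theta>) (\<lambda>b. if b then map_pmf Some (pmf_of_set Acts) else return_pmf None)"

lemma pmf_p0_None: "0 \<le> \<theta> \<Longrightarrow> \<theta> \<le> 1 \<Longrightarrow> pmf (p0 \<theta>) None = 1 - \<theta>"
proof -
  assume th: "0 \<le> \<theta>" "\<theta> \<le> 1"
  have "pmf (map_pmf Some (pmf_of_set Acts)) None = 0"
    by (simp add: pmf_eq_0_set_pmf)
  then show ?thesis using th by (simp add: p0_def pmf_bind)
qed

lemma pmf_p0_Some: "0 \<le> \<theta> \<Longrightarrow> \<theta> \<le> 1 \<Longrightarrow> a \<in> Acts \<Longrightarrow> pmf (p0 \<theta>) (Some a) = \<theta> / nA"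
proof -
  assume th: "0 \<le> \<theta>" "\<theta> \<le> 1" and a: "a \<in> Acts"
  have "pmf (map_pmf Some (pmf_of_set Acts)) (Some a) = pmf (pmf_of_set Acts) a"
    by (rule pmf_map_inj') simp
  also have "\<dots> = 1 / nA" using a fin Acts_ne by (simp add: nA_def)
  finally show ?thesis using th by (simp add: p0_def pmf_bind)
qed

lemma set_p0: "set_pmf (p0 \<theta>) \<subseteq> insert None (Some ` Acts)"
  using fin Acts_ne by (auto simp: p0_def set_pmf_of_set[OF Acts_ne fin] split: if_splits)

lemma int_p0:
  fixes F :: "'a option \<Rightarrow> real"
  assumes "0 \<le> \<theta>" "\<theta> \<le> 1"
  shows "(\<integral>q. F q \<partial>measure_pmf (p0 \<theta>)) = (1 - \<theta>) * F None + \<theta> / nA * (\<Sum>a\<in>Acts. F (Some a))"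
proof -
  have "(\<integral>q. F q \<partial>measure_pmf (p0 \<theta>)) = (\<Sum>q\<in>insert None (Some ` Acts). F q * pmf (p0 \<theta>) q)"
    by (rule integral_measure_pmf_real) (use fin set_p0 in auto)
  also have "\<dots> = F None * pmf (p0 \<theta>) None + (\<Sum>a\<in>Acts. F (Some a) * pmf (p0 \<theta>) (Some a))"
    using fin by (subst sum.insert) (auto simp: sum.reindex)
  also have "\<dots> = (1 - \<theta>) * F None + \<theta> / nA * (\<Sum>a\<in>Acts. F (Some a))"
    using assms by (simp add: pmf_p0_None pmf_p0_Some sum_distrib_left mult.commute)
  finally show ?thesis .
qed

definition vec :: "real \<Rightarrow> nat \<Rightarrow> 'a option \<Rightarrow> chain_state \<times> 'a \<Rightarrow> real" where
  "vec \<theta> t q = restrict (\<lambda>(s, b). case q of None \<Rightarrow> 0 | Some a \<Rightarrow> if b = a then r t s a * nA / \<theta> else 0) (S \<times> Acts)"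

definition nuth :: "real \<Rightarrow> nat \<Rightarrow> (chain_state \<times> 'a \<Rightarrow> real) measure" where
  "nuth \<theta> t = distr (measure_pmf (p0 \<theta>)) (rew_space S Acts) (vec \<theta> t)"

lemma vec_meas: "vec \<theta> t \<in> measurable (measure_pmf (p0 \<theta>)) (rew_space S Acts)"
  by (simp add: rew_space_def space_PiM vec_def)

lemma int_nuth:
  fixes g :: "_ \<Rightarrow> real"
  assumes "g \<in> borel_measurable (rew_space S Acts)"
  shows "integrable (nuth \<theta> t) g \<and> (\<integral>x. g x \<partial>nuth \<theta> t) = (\<integral>q. g (vec \<theta> t q) \<partial>measure_pmf (p0 \<theta>))"
proof -
  have fs: "finite (set_pmf (p0 \<theta>))" using set_p0 fin by (meson finite_imageI finite_insert finite_subset)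
  have "integrable (nuth \<theta> t) g"
    unfolding nuth_def using integrable_measure_pmf_finite[OF fs]
    by (subst integrable_distr_eq[OF vec_meas assms]) auto
  moreover have "(\<integral>x. g x \<partial>nuth \<theta> t) = (\<integral>q. g (vec \<theta> t q) \<partial>measure_pmf (p0 \<theta>))"
    unfolding nuth_def by (rule integral_distr[OF vec_meas assms])
  ultimately show ?thesis by simp
qed

lemma nuth_D:
  assumes th: "0 < \<theta>" "\<theta> \<le> 1"
  shows "nuth \<theta> \<in> reward_dists S Acts H r"
  unfolding reward_dists_def
proof (intro CollectI ballI conjI)
  fix h s a assume h: "h \<in> {1..H}" and sS: "s \<in> S" and a: "a \<in> Acts"
  have c: "(\<lambda>x. x (s, a)) \<in> borel_measurable (rew_space S Acts)" by (rule coord_meas) (use sS a in auto)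
  note I = int_nuth[OF c, of \<theta> h]
  show "integrable (nuth \<theta> h) (\<lambda>x. x (s, a))" using I by simp
  have nnv: "0 \<le> vec \<theta> h q (s, a)" for q
    using rnn h sS a th nA_pos by (auto simp: vec_def split: option.split)
  show "AE x in nuth \<theta> h. 0 \<le> x (s, a)"
    unfolding nuth_def
    by (subst AE_distr_iff[OF vec_meas]) (use c nnv in auto)
  have "(\<integral>x. x (s, a) \<partial>nuth \<theta> h) = (1 - \<theta>) * 0 + \<theta> / nA * (\<Sum>b\<in>Acts. (if a = b then r h s b * nA / \<theta> else 0))"
    using I int_p0[of \<theta> "\<lambda>q. vec \<theta> h q (s, a)"] th sS a by (simp add: vec_def)
  also have "\<dots> = r h s a" using a fin th nA_pos by simp
  finally show "(\<integral>x. x (s, a) \<partial>nuth \<theta> h) = r h s a" .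
next
  fix h assume h: "h \<in> {1..H}"
  show "prob_space (nuth \<theta> h)"
    unfolding nuth_def by (rule prob_space.prob_space_distr[OF prob_space_measure_pmf vec_meas])
  show "sets (nuth \<theta> h) = sets (rew_space S Acts)"
    by (simp add: nuth_def)
qed

lemma fnd_meas: "t \<in> {1..H} \<Longrightarrow> (\<lambda>x. fnd x t) \<in> measurable (rew_space S Acts) (count_space UNIV)"
  unfolding fnd_def by (rule find_meas, rule coord_meas) (use set_xs in \<open>auto simp: chain_states_def\<close>)

lemma Zf_meas: "t \<in> {1..H} \<Longrightarrow> Zf t \<in> borel_measurable (rew_space S Acts)"
proof -
  assume t: "t \<in> {1..H}"
  have "(\<lambda>x. (\<lambda>q. if q = None then 1 else 0 :: real) (fnd x t)) \<in> borel_measurable (rew_space S Acts)"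
    by (rule measurable_compose[OF fnd_meas[OF t]]) simp
  then show ?thesis by (simp add: Zf_def[abs_def])
qed

lemma Wf_sum: "Wf t x = (\<Sum>b\<in>set xs. if fnd x t = Some b then x (CS t, b) else 0)"
proof (cases "fnd x t")
  case None
  then show ?thesis by (simp add: Wf_def)
next
  case (Some c)
  then have "c \<in> set xs" unfolding fnd_def by (metis find_Some_iff nth_mem)
  then show ?thesis using Some by (simp add: Wf_def)
qed

lemma Wf_meas: "t \<in> {1..H} \<Longrightarrow> Wf t \<in> borel_measurable (rew_space S Acts)"
proof -
  assume t: "t \<in> {1..H}"
  note f[measurable] = fnd_meas[OF t]
  have c[measurable]: "(\<lambda>x. x (CS t, b)) \<in> borel_measurable (rew_space S Acts)" if "b \<in> set xs" for b
    by (rule coord_meas) (use that set_xs t in \<open>auto simp: chain_states_def\<close>)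
  have "(\<lambda>x. \<Sum>b\<in>set xs. if fnd x t = Some b then x (CS t, b) else 0) \<in> borel_measurable (rew_space S Acts)"
  proof (rule borel_measurable_sum)
    fix b assume b: "b \<in> set xs"
    have p: "{x \<in> space (rew_space S Acts). fnd x t = Some b} \<in> sets (rew_space S Acts)"
      by measurable
    show "(\<lambda>x. if fnd x t = Some b then x (CS t, b) else 0) \<in> borel_measurable (rew_space S Acts)"
      by (rule measurable_If[OF c[OF b] _ p]) simp
  qed
  then show ?thesis by (simp add: Wf_sum[abs_def])
qed

lemma vec_CS: "t \<in> {1..H} \<Longrightarrow> b \<in> Acts \<Longrightarrow> vec \<theta> t q (CS t, b) = (case q of None \<Rightarrow> 0 | Some a \<Rightarrow> if b = a then r t (CS t) a * nA / \<theta> else 0)"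
  by (simp add: vec_def chain_states_def)

lemma fnd_None: "t \<in> {1..H} \<Longrightarrow> fnd (vec \<theta> t None) t = None"
  unfolding fnd_def using set_xs by (auto simp: find_None_iff vec_CS)

lemma Wf_Some:
  assumes t: "t \<in> {1..H}" and a: "a \<in> Acts" and th: "0 < \<theta>"
  shows "Wf t (vec \<theta> t (Some a)) = r t (CS t) a * nA / \<theta>"
proof -
  have "fnd (vec \<theta> t (Some a)) t = (if a \<in> set xs \<and> vec \<theta> t (Some a) (CS t, a) > 0 then Some a else None)"
    unfolding fnd_def by (rule find_single) (use set_xs t in \<open>auto simp: vec_CS\<close>)
  moreover have "vec \<theta> t (Some a) (CS t, a) = r t (CS t) a * nA / \<theta>" using t a by (simp add: vec_CS)
  moreover have "0 \<le> r t (CS t) a * nA / \<theta>"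
    using rnn t a th nA_pos by (auto simp: chain_states_def)
  moreover have "a \<notin> set xs \<Longrightarrow> r t (CS t) a = 0" using set_xs a ra1 t by auto
  ultimately show ?thesis unfolding Wf_def by (auto split: if_splits)
qed

lemma Zint:
  assumes t: "t \<in> {1..H}" and th: "0 < \<theta>" "\<theta> \<le> 1"
  shows "integrable (nuth \<theta> t) (Zf t) \<and> 1 - \<theta> \<le> (\<integral>x. Zf t x \<partial>nuth \<theta> t)"
proof -
  note I = int_nuth[OF Zf_meas[OF t], of \<theta> t]
  have "(\<integral>x. Zf t x \<partial>nuth \<theta> t) = (1 - \<theta>) * Zf t (vec \<theta> t None) + \<theta> / nA * (\<Sum>a\<in>Acts. Zf t (vec \<theta> t (Some a)))"
    using I int_p0[of \<theta> "\<lambda>q. Zf t (vec \<theta> t q)"] th by simp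
  moreover have "Zf t (vec \<theta> t None) = 1" using fnd_None[OF t] by (simp add: Zf_def)
  moreover have "0 \<le> \<theta> / nA * (\<Sum>a\<in>Acts. Zf t (vec \<theta> t (Some a)))"
    using th nA_pos by (intro mult_nonneg_nonneg sum_nonneg Zf_nonneg) auto
  ultimately show ?thesis using I by simp
qed

lemma Wint:
  assumes t: "t \<in> {1..H}" and th: "0 < \<theta>" "\<theta> \<le> 1"
  shows "integrable (nuth \<theta> t) (Wf t) \<and> (\<integral>x. Wf t x \<partial>nuth \<theta> t) = (\<Sum>a\<in>Acts. r t (CS t) a)"
proof -
  note I = int_nuth[OF Wf_meas[OF t], of \<theta> t]
  have "(\<integral>x. Wf t x \<partial>nuth \<theta> t) = (1 - \<theta>) * Wf t (vec \<theta> t None) + \<theta> / nA * (\<Sum>a\<in>Acts. Wf t (vec \<theta> t (Some a)))"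
    using I int_p0[of \<theta> "\<lambda>q. Wf t (vec \<theta> t q)"] th by simp
  also have "Wf t (vec \<theta> t None) = 0" using fnd_None[OF t] by (simp add: Wf_def)
  also have "(\<Sum>a\<in>Acts. Wf t (vec \<theta> t (Some a))) = (\<Sum>a\<in>Acts. r t (CS t) a * nA / \<theta>)"
    using Wf_Some[OF t _ th(1)] by simp
  also have "(1 - \<theta>) * 0 + \<theta> / nA * (\<Sum>a\<in>Acts. r t (CS t) a * nA / \<theta>) = (\<Sum>a\<in>Acts. r t (CS t) a)"
  proof -
    have "\<theta> / nA * (\<Sum>a\<in>Acts. r t (CS t) a * nA / \<theta>) = (\<Sum>a\<in>Acts. \<theta> / nA * (r t (CS t) a * nA / \<theta>))"
      by (simp add: sum_distrib_left)
    also have "\<dots> = (\<Sum>a\<in>Acts. r t (CS t) a)"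
      using th nA_pos by (intro sum.cong refl) (simp add: field_simps)
    finally show ?thesis by simp
  qed
  finally show ?thesis using I by simp
qed

lemma VL_lower:
  assumes th: "0 < \<theta>" "\<theta> < 1" and L: "1 \<le> L"
  shows "ennreal ((1 - \<theta>) ^ H * Sum) \<le> opt_value S Acts H PP chain_mu L (nuth \<theta>)"
proof -
  define \<nu> where "\<nu> = nuth \<theta>"
  have nu: "\<nu> \<in> reward_dists S Acts H r" using nuth_D th by (auto simp: \<nu>_def)
  interpret P: product_prob_space "nu' \<nu>" "{1..H}" by (rule prod_ps[OF nu])
  define F where "F t i x = (if i < t then Zf i x else if i = t then Wf i x else 1)" for t i x
  have Fnn: "0 \<le> F t i x" for t i x by (simp add: F_def Zf_nonneg Wf_nonneg)
  have Feq: "F t i = (if i < t then Zf i else if i = t then Wf i else (\<lambda>_. 1))" for t i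
    by (auto simp: F_def fun_eq_iff)
  have Fm: "F t i \<in> borel_measurable (rew_space S Acts)" if i: "i \<in> {1..H}" for t i
    unfolding Feq using Zf_meas[OF i] Wf_meas[OF i] by auto
  have Fm\<nu>: "F t i \<in> borel_measurable (\<nu> i)" if i: "i \<in> {1..H}" for t i
    using Fm[OF i] measurable_cong_sets[OF D_sets[OF nu i] refl] by blast
  define lowr where "lowr t i = (if i < t then 1 - \<theta> else if i = t then (\<Sum>a\<in>Acts. r t (CS t) a) else 1)" for t i
  have Fint: "integrable (\<nu> i) (F t i) \<and> lowr t i \<le> (\<integral>x. F t i x \<partial>\<nu> i)" if i: "i \<in> {1..H}" for t i
  proof -
    have ps: "prob_space (\<nu> i)" by (rule D_prob[OF nu i])
    show ?thesis
    proof (cases "i < t")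
      case True
      then show ?thesis using Zint[OF i th(1)] th unfolding Feq lowr_def \<nu>_def by simp
    next
      case False
      show ?thesis
      proof (cases "i = t")
        case True
        then show ?thesis using Wint[OF i th(1)] th unfolding Feq lowr_def \<nu>_def by simp
      next
        case False
        interpret ps: prob_space "\<nu> i" by (rule ps)
        show ?thesis using False \<open>\<not> i < t\<close> unfolding Feq lowr_def
          by (simp add: ps.prob_space)
      qed
    qed
  qed
  have lowr_nn: "0 \<le> lowr t i" if "t \<in> {1..H}" for t i
    using th that rnn by (auto simp: lowr_def chain_states_def intro!: sum_nonneg)
  have CS1: "CS 1 \<in> S" using H1 by (auto simp: chain_states_def)
  have "ennreal ((1 - \<theta>) ^ H * Sum) = (\<Sum>t\<in>{1..H}. ennreal ((1 - \<theta>) ^ H * (\<Sum>a\<in>Acts. r t (CS t) a)))"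
    unfolding Sum_def sum_distrib_left using th rnn
    by (subst sum_ennreal) (auto intro!: mult_nonneg_nonneg sum_nonneg simp: chain_states_def)
  also have "\<dots> \<le> (\<Sum>t\<in>{1..H}. ennreal (\<Prod>i\<in>{1..H}. (\<integral>x. F t i x \<partial>\<nu> i)))"
  proof (intro sum_mono ennreal_leI)
    fix t assume t: "t \<in> {1..H}"
    have "(1 - \<theta>) ^ H * (\<Sum>a\<in>Acts. r t (CS t) a) \<le> (1 - \<theta>) ^ (t - 1) * (\<Sum>a\<in>Acts. r t (CS t) a)"
      using th t rnn by (intro mult_right_mono power_decreasing sum_nonneg) (auto simp: chain_states_def)
    also have "\<dots> = (\<Prod>i\<in>{1..H}. lowr t i)"
      unfolding lowr_def prod_split[OF t] by simp
    also have "\<dots> \<le> (\<Prod>i\<in>{1..H}. (\<integral>x. F t i x \<partial>\<nu> i))"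
      using Fint lowr_nn[OF t] by (intro prod_mono) auto
    finally show "(1 - \<theta>) ^ H * (\<Sum>a\<in>Acts. r t (CS t) a) \<le> (\<Prod>i\<in>{1..H}. (\<integral>x. F t i x \<partial>\<nu> i))" .
  qed
  also have "\<dots> = (\<Sum>t\<in>{1..H}. (\<Prod>i\<in>{1..H}. (\<integral>\<^sup>+x. ennreal (F t i x) \<partial>nu' \<nu> i)))"
  proof (intro sum.cong refl)
    fix t assume t: "t \<in> {1..H}"
    have "ennreal (\<Prod>i\<in>{1..H}. (\<integral>x. F t i x \<partial>\<nu> i)) = (\<Prod>i\<in>{1..H}. ennreal (\<integral>x. F t i x \<partial>\<nu> i))"
      using Fnn by (subst prod_ennreal) (auto intro!: Bochner_Integration.integral_nonneg)
    also have "\<dots> = (\<Prod>i\<in>{1..H}. (\<integral>\<^sup>+x. ennreal (F t i x) \<partial>nu' \<nu> i))"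
    proof (intro prod.cong refl)
      fix i assume i: "i \<in> {1..H}"
      have "nu' \<nu> i = \<nu> i" using i by (simp add: nu'_def)
      then show "ennreal (\<integral>x. F t i x \<partial>\<nu> i) = (\<integral>\<^sup>+x. ennreal (F t i x) \<partial>nu' \<nu> i)"
        using Fint[OF i] Fnn by (simp add: nn_integral_eq_integral)
    qed
    finally show "ennreal (\<Prod>i\<in>{1..H}. (\<integral>x. F t i x \<partial>\<nu> i)) = (\<Prod>i\<in>{1..H}. (\<integral>\<^sup>+x. ennreal (F t i x) \<partial>nu' \<nu> i))" .
  qed
  also have "\<dots> = (\<Sum>t\<in>{1..H}. (\<integral>\<^sup>+\<rho>. (\<Prod>i\<in>{1..H}. ennreal (F t i (\<rho> i))) \<partial>PiM {1..H} (nu' \<nu>)))"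
  proof (intro sum.cong refl)
    fix t assume t: "t \<in> {1..H}"
    show "(\<Prod>i\<in>{1..H}. (\<integral>\<^sup>+x. ennreal (F t i x) \<partial>nu' \<nu> i)) = (\<integral>\<^sup>+\<rho>. (\<Prod>i\<in>{1..H}. ennreal (F t i (\<rho> i))) \<partial>PiM {1..H} (nu' \<nu>))"
    proof (rule P.product_nn_integral_prod[symmetric])
      fix i assume i: "i \<in> {1..H}"
      have "nu' \<nu> i = \<nu> i" using i by (simp add: nu'_def)
      then show "(\<lambda>x. ennreal (F t i x)) \<in> borel_measurable (nu' \<nu> i)" using Fm\<nu>[OF i] by simp
    qed simp
  qed
  also have "\<dots> = (\<integral>\<^sup>+\<rho>. (\<Sum>t\<in>{1..H}. \<Prod>i\<in>{1..H}. ennreal (F t i (\<rho> i))) \<partial>PiM {1..H} \<nu>)"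
  proof -
    have m: "(\<lambda>\<rho>. \<Prod>i\<in>{1..H}. ennreal (F t i (\<rho> i))) \<in> borel_measurable (PiM {1..H} \<nu>)" for t
    proof (rule borel_measurable_prod_ennreal)
      fix i assume i: "i \<in> {1..H}"
      have "(\<lambda>x. ennreal (F t i x)) \<in> borel_measurable (\<nu> i)" using Fm\<nu>[OF i] by simp
      from measurable_compose[OF comp_meas[OF i, of \<nu>] this]
      show "(\<lambda>\<rho>. ennreal (F t i (\<rho> i))) \<in> borel_measurable (PiM {1..H} \<nu>)" by simp
    qed
    have "(\<integral>\<^sup>+\<rho>. (\<Sum>t\<in>{1..H}. \<Prod>i\<in>{1..H}. ennreal (F t i (\<rho> i))) \<partial>PiM {1..H} \<nu>)
      = (\<Sum>t\<in>{1..H}. (\<integral>\<^sup>+\<rho>. (\<Prod>i\<in>{1..H}. ennreal (F t i (\<rho> i))) \<partial>PiM {1..H} \<nu>))"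
      by (rule nn_integral_sum) (use m in auto)
    then show ?thesis unfolding PiM_nu'[of \<nu>] by simp
  qed
  also have "\<dots> \<le> (\<integral>\<^sup>+\<rho>. ennreal (CR H \<rho> 1 (CS 1) pi1) \<partial>PiM {1..H} \<nu>)"
  proof (rule nn_integral_mono_AE)
    show "AE \<rho> in PiM {1..H} \<nu>. (\<Sum>t\<in>{1..H}. \<Prod>i\<in>{1..H}. ennreal (F t i (\<rho> i))) \<le> ennreal (CR H \<rho> 1 (CS 1) pi1)"
      using AE_nonneg[OF nu]
    proof eventually_elim
      case (elim \<rho>)
      have "(\<Sum>t\<in>{1..H}. \<Prod>i\<in>{1..H}. ennreal (F t i (\<rho> i)))
          = (\<Sum>t\<in>{1..H}. ennreal ((\<Prod>u\<in>{1..<t}. Zf u (\<rho> u)) * Wf t (\<rho> t)))"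
      proof (intro sum.cong refl)
        fix t assume t: "t \<in> {1..H}"
        have "(\<Prod>i\<in>{1..H}. ennreal (F t i (\<rho> i))) = ennreal (\<Prod>i\<in>{1..H}. F t i (\<rho> i))"
          using Fnn by (simp add: prod_ennreal)
        also have "(\<Prod>i\<in>{1..H}. F t i (\<rho> i)) = (\<Prod>i\<in>{1..H}. if i < t then Zf i (\<rho> i) else if i = t then Wf t (\<rho> t) else 1)"
          by (intro prod.cong refl) (simp add: F_def)
        also have "\<dots> = (\<Prod>u\<in>{1..<t}. Zf u (\<rho> u)) * Wf t (\<rho> t)"
          by (rule prod_split[OF t])
        finally show "(\<Prod>i\<in>{1..H}. ennreal (F t i (\<rho> i))) = ennreal ((\<Prod>u\<in>{1..<t}. Zf u (\<rho> u)) * Wf t (\<rho> t))" .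
      qed
      also have "\<dots> = ennreal (\<Sum>t\<in>{1..H}. (\<Prod>u\<in>{1..<t}. Zf u (\<rho> u)) * Wf t (\<rho> t))"
        by (rule sum_ennreal) (intro mult_nonneg_nonneg prod_nonneg Zf_nonneg Wf_nonneg)
      also have "\<dots> \<le> ennreal (CR H \<rho> 1 (CS 1) pi1)"
        using pointwise_LB[OF elim, of 1 H] by (intro ennreal_leI) simp
      finally show ?case .
    qed
  qed
  also have "\<dots> = mdp_value S Acts H PP chain_mu pi1 \<nu>"
    by (rule mdp_value_eq[symmetric])
  also have "\<dots> \<le> opt_value S Acts H PP chain_mu L \<nu>"
    unfolding opt_value_def by (rule SUP_upper[OF pi1_pol[OF L]])
  finally show ?thesis by (simp add: \<nu>_def)
qed

lemma Sum_pos: "0 < Sum"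
proof -
  obtain k a where k: "k \<in> {1..H}" and a: "a \<in> Acts - {a1}" and ne: "r k (CS k) a \<noteq> 0" using rex by blast
  have nn: "t \<in> {1..H} \<Longrightarrow> b \<in> Acts \<Longrightarrow> 0 \<le> r t (CS t) b" for t b using rnn by (auto simp: chain_states_def)
  have pos: "0 < r k (CS k) a" using nn[OF k] a ne by force
  have "r k (CS k) a \<le> (\<Sum>b\<in>Acts. r k (CS k) b)"
    by (rule member_le_sum) (use a fin nn[OF k] in auto)
  also have "\<dots> \<le> Sum" unfolding Sum_def
    by (rule member_le_sum[where f="\<lambda>k. \<Sum>b\<in>Acts. r k (CS k) b"]) (use k nn in \<open>auto intro!: sum_nonneg\<close>)
  finally show ?thesis using pos by simp
qed

lemma M_pos: "0 < M"
proof -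
  obtain k a where k: "k \<in> {1..H}" and a: "a \<in> Acts - {a1}" and ne: "r k (CS k) a \<noteq> 0" using rex by blast
  have "0 < r k (CS k) a" using rnn k a ne by (force simp: chain_states_def)
  then show ?thesis using M_ge[OF k] a by force
qed

lemma VL_real:
  assumes nu: "\<nu> \<in> reward_dists S Acts H r"
  shows "\<exists>v. opt_value S Acts H PP chain_mu L \<nu> = ennreal v \<and> 0 \<le> v \<and> v \<le> Sum"
proof -
  have le: "opt_value S Acts H PP chain_mu L \<nu> \<le> ennreal Sum"
    unfolding opt_value_def by (rule SUP_least) (rule value_upper[OF nu])
  then have lt: "opt_value S Acts H PP chain_mu L \<nu> < top" using ennreal_less_top le_less_trans by blast
  define v where "v = enn2real (opt_value S Acts H PP chain_mu L \<nu>)"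
  have e: "opt_value S Acts H PP chain_mu L \<nu> = ennreal v" unfolding v_def using lt by simp
  have v1: "v \<le> Sum" using le Sum_pos unfolding e by simp
  have v0: "0 \<le> v" by (simp add: v_def)
  show ?thesis using e v0 v1 by blast
qed

lemma eps_lemma:
  fixes x q :: real
  assumes q: "0 \<le> q" and b: "\<And>\<theta>. 0 < \<theta> \<Longrightarrow> \<theta> < 1 \<Longrightarrow> x \<le> q / (1 - \<theta>) ^ H"
  shows "x \<le> q"
proof (rule ccontr)
  assume "\<not> x \<le> q"
  then have xq: "q < x" by simp
  have x0: "0 < x" using xq q by simp
  have Hp: "0 < real H" using H1 by simp
  define \<theta> where "\<theta> = (x - q) / (2 * x * H)"
  have th0: "0 < \<theta>" unfolding \<theta>_def using xq x0 Hp by simp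
  have Hth: "real H * \<theta> = (x - q) / (2 * x)" unfolding \<theta>_def using Hp x0 by (simp add: field_simps)
  have Hth1: "real H * \<theta> < 1" unfolding Hth using xq x0 q by (simp add: field_simps)
  have "1 * \<theta> \<le> real H * \<theta>" using H1 th0 by (intro mult_right_mono) auto
  then have th1: "\<theta> < 1" using Hth1 by simp
  have bern: "1 - real H * \<theta> \<le> (1 - \<theta>) ^ H"
    using Bernoulli_inequality[of "- \<theta>" H] th1 by simp
  have pos: "0 < 1 - real H * \<theta>" using Hth1 by simp
  have "x \<le> q / (1 - \<theta>) ^ H" by (rule b[OF th0 th1])
  also have "\<dots> \<le> q / (1 - real H * \<theta>)"
    using q bern pos by (intro divide_left_mono) auto
  also have "\<dots> = 2 * x * q / (x + q)"
    unfolding Hth using x0 q xq by (simp add: field_simps)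
  also have "\<dots> < x" using x0 q xq by (simp add: field_simps)
  finally show False by simp
qed

lemma CR_eq:
  assumes L: "1 \<le> L"
  shows "comp_ratio S Acts H PP chain_mu L r = ennreal (M / Sum)"
proof (rule antisym)
  show "comp_ratio S Acts H PP chain_mu L r \<le> ennreal (M / Sum)"
  proof -
    let ?X = "comp_ratio S Acts H PP chain_mu L r"
    have bound: "?X \<le> ennreal (M / Sum / (1 - \<theta>) ^ H)" if th: "0 < \<theta>" "\<theta> < 1" for \<theta>
    proof -
      have nu: "nuth \<theta> \<in> reward_dists S Acts H r" using nuth_D th by auto
      obtain v where v: "opt_value S Acts H PP chain_mu L (nuth \<theta>) = ennreal v" "0 \<le> v" "v \<le> Sum"
        using VL_real[OF nu] by blast
      have w: "(1 - \<theta>) ^ H * Sum \<le> v" using VL_lower[OF th L] v by simp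
      have wpos: "0 < (1 - \<theta>) ^ H * Sum" using th Sum_pos by simp
      then have vpos: "0 < v" using w by simp
      have "?X \<le> ratio (opt_value S Acts H PP chain_mu 0 (nuth \<theta>)) (opt_value S Acts H PP chain_mu L (nuth \<theta>))"
        unfolding comp_ratio_def by (rule INF_lower[OF nu])
      also have "\<dots> = ennreal (M / v)"
        using vpos M_nonneg by (simp add: ratio_def V0_eq[OF nu] v(1) divide_ennreal)
      also have "\<dots> \<le> ennreal (M / ((1 - \<theta>) ^ H * Sum))"
        using M_nonneg w wpos by (intro ennreal_leI divide_left_mono) auto
      also have "M / ((1 - \<theta>) ^ H * Sum) = M / Sum / (1 - \<theta>) ^ H" by simp
      finally show ?thesis .
    qed
    have "?X \<le> ennreal (M / Sum / (1 - 1/2) ^ H)" by (rule bound) auto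
    then have lt: "?X < top" using ennreal_less_top le_less_trans by blast
    define x where "x = enn2real ?X"
    have e: "?X = ennreal x" unfolding x_def using lt by simp
    have x0: "0 \<le> x" by (simp add: x_def)
    have q0: "0 \<le> M / Sum" using M_nonneg Sum_pos by simp
    have "x \<le> M / Sum"
    proof (rule eps_lemma[OF q0])
      fix \<theta> :: real assume th: "0 < \<theta>" "\<theta> < 1"
      have "0 \<le> M / Sum / (1 - \<theta>) ^ H" using q0 th by (intro divide_nonneg_nonneg) (auto simp: M_nonneg less_imp_le[OF Sum_pos])
      then show "x \<le> M / Sum / (1 - \<theta>) ^ H" using bound[OF th] unfolding e by simp
    qed
    then show ?thesis unfolding e using q0 by simp
  qed
next
  show "ennreal (M / Sum) \<le> comp_ratio S Acts H PP chain_mu L r"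
    unfolding comp_ratio_def
  proof (rule INF_greatest)
    fix \<nu> assume nu: "\<nu> \<in> reward_dists S Acts H r"
    obtain v where v: "opt_value S Acts H PP chain_mu L \<nu> = ennreal v" "0 \<le> v" "v \<le> Sum"
      using VL_real[OF nu] by blast
    show "ennreal (M / Sum) \<le> ratio (opt_value S Acts H PP chain_mu 0 \<nu>) (opt_value S Acts H PP chain_mu L \<nu>)"
    proof (cases "v = 0")
      case True
      then show ?thesis by (simp add: ratio_def v(1))
    next
      case False
      then have vpos: "0 < v" using v by simp
      have "ratio (opt_value S Acts H PP chain_mu 0 \<nu>) (opt_value S Acts H PP chain_mu L \<nu>) = ennreal (M / v)"
        using vpos M_nonneg by (simp add: ratio_def V0_eq[OF nu] v(1) divide_ennreal)
      moreover have "M / Sum \<le> M / v"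
        using M_nonneg vpos v(3) by (intro divide_left_mono) auto
      ultimately show ?thesis by (simp add: ennreal_leI)
    qed
  qed
qed

lemma ratio_ge: "1 / (real (card Acts - 1) * real H) \<le> M / Sum"
proof -
  have c1: "1 \<le> card Acts - 1" using card2 by simp
  have cr: "real (card (Acts - {a1})) = real (card Acts - 1)" using a1A fin by (simp add: card_Diff_singleton)
  have "Sum = (\<Sum>k=1..H. \<Sum>a\<in>Acts - {a1}. r k (CS k) a)"
    unfolding Sum_def
  proof (rule sum.cong[OF refl])
    fix k assume k: "k \<in> {1..H}"
    show "(\<Sum>a\<in>Acts. r k (CS k) a) = (\<Sum>a\<in>Acts - {a1}. r k (CS k) a)"
      using ra1 k a1A fin by (simp add: sum.remove[of Acts a1])
  qed
  also have "\<dots> \<le> (\<Sum>k=1..H. \<Sum>a\<in>Acts - {a1}. M)"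
    using M_ge by (intro sum_mono) auto
  also have "\<dots> = real H * (real (card Acts - 1) * M)" using cr by simp
  finally have S: "Sum \<le> real H * (real (card Acts - 1) * M)" .
  have pos: "0 < real (card Acts - 1) * real H" using c1 H1 by simp
  define c where "c = real (card Acts - 1)"
  have cpos: "0 < c * real H" using pos unfolding c_def .
  have S': "Sum \<le> real H * (c * M)" using S unfolding c_def .
  have "1 / (c * real H) = M / (real H * (c * M))"
    using M_pos cpos by (simp add: field_simps)
  also have "\<dots> \<le> M / Sum"
  proof (rule divide_left_mono[OF S'])
    show "0 \<le> M" using M_pos by simp
    have "0 < (c * real H) * M" using cpos M_pos by (rule mult_pos_pos)
    then have "0 < real H * (c * M)" by (simp only: ac_simps)
    then show "0 < real H * (c * M) * Sum" using Sum_pos by simp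
  qed
  finally have "1 / (c * real H) \<le> M / Sum" .
  then show ?thesis unfolding c_def .
qed

end

theorem mainTheorem8:
  fixes Acts :: "'a set" and a1 :: 'a and H :: nat
    and r :: "nat \<Rightarrow> chain_state \<Rightarrow> 'a \<Rightarrow> real"
  assumes "finite Acts" and "card Acts \<ge> 2" and "a1 \<in> Acts" and "H \<ge> 1"
    and "\<forall>h\<in>{1..H}. \<forall>s\<in>chain_states H. \<forall>a\<in>Acts. 0 \<le> r h s a"
    and "\<forall>h\<in>{1..H}. \<forall>k\<in>{1..H}. r h (CS k) a1 = 0"
    and "\<forall>h\<in>{1..H}. \<forall>a\<in>Acts. r h CT a = 0"
    and "\<exists>k\<in>{1..H}. \<exists>a\<in>Acts - {a1}. r k (CS k) a \<noteq> 0"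
  shows "comp_ratio (chain_states H) Acts H (chain_P H a1) chain_mu H r
           = ennreal ((MAX (k, a) \<in> {1..H} \<times> Acts. r k (CS k) a)
                      / (\<Sum>k=1..H. \<Sum>a\<in>Acts. r k (CS k) a))
       \<and> comp_ratio (chain_states H) Acts H (chain_P H a1) chain_mu 1 r
           = ennreal ((MAX (k, a) \<in> {1..H} \<times> Acts. r k (CS k) a)
                      / (\<Sum>k=1..H. \<Sum>a\<in>Acts. r k (CS k) a))
       \<and> (MAX (k, a) \<in> {1..H} \<times> Acts. r k (CS k) a) / (\<Sum>k=1..H. \<Sum>a\<in>Acts. r k (CS k) a)
           \<ge> 1 / (real (card Acts - 1) * real H)"
proof -
  interpret C: chain_setup Acts a1 H r
    by (rule chain_setup.intro) (use assms in auto)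
  show ?thesis
    using C.CR_eq[of H] C.CR_eq[of 1] C.ratio_ge assms(4)
    unfolding C.M_def C.Sum_def by simp
qed

end
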